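(* Let $\alpha$ be a probability distribution on $[d]$ with $\alpha_1\ge\cdots\ge\alpha_d$ and fix $k\in[d]$. Then \[ n\mapsto \mathbb E_{\lambda\sim\mathrm{SW}^n(\alpha)}\big[(\lambda_1+\cdots+\lambda_k)-(\alpha_1+\cdots+\alpha_k)n\big] \] is a nondecreasing function of $n\in\mathbb N$.
   Context: $\mathrm{SW}^n(\alpha)$ is the law of the RSK shape $\mathrm{shRSK}(\boldsymbol w)$ (Young diagram $\lambda_1\ge\cdots\ge\lambda_d\ge0$ whose first $k$ rows sum to the maximum total length of $k$ disjoint weakly increasing subsequences of $\boldsymbol w$), where $\boldsymbol w\in[d]^n$ has i.i.d. letters with law $\alpha$. *)

theory Defs
  imports Complex_Main
begin

text \<open>Letters of the alphabet [d] are encoded as 0,...,d-1; a word of length n is a list.\<close>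

definition words :: "nat \<Rightarrow> nat \<Rightarrow> nat list set" where
  "words d n = {w. length w = n \<and> set w \<subseteq> {0..<d}}"

definition weakly_incr_on :: "nat list \<Rightarrow> nat set \<Rightarrow> bool" where
  "weakly_incr_on w S \<longleftrightarrow> S \<subseteq> {..<length w} \<and>
     (\<forall>i\<in>S. \<forall>j\<in>S. i < j \<longrightarrow> w ! i \<le> w ! j)"

definition greene :: "nat \<Rightarrow> nat list \<Rightarrow> nat" where
  "greene k w = Max {(\<Sum>i<k. card (S i)) | S.
      (\<forall>i<k. weakly_incr_on w (S i)) \<and> (\<forall>i<k. \<forall>j<k. i \<noteq> j \<longrightarrow> S i \<inter> S j = {})}"

text \<open>Row lengths of the RSK shape: lambda_1 + ... + lambda_k = greene k w,
  so lambda_i = greene i w - greene (i-1) w (rows indexed from 1).\<close>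
definition shRSK :: "nat list \<Rightarrow> nat \<Rightarrow> nat" where
  "shRSK w i = greene i w - greene (i - 1) w"

definition word_prob :: "(nat \<Rightarrow> real) \<Rightarrow> nat list \<Rightarrow> real" where
  "word_prob \<alpha> w = (\<Prod>i<length w. \<alpha> (w ! i))"

definition SW_excess :: "nat \<Rightarrow> (nat \<Rightarrow> real) \<Rightarrow> nat \<Rightarrow> nat \<Rightarrow> real" where
  "SW_excess d \<alpha> k n = (\<Sum>w\<in>words d n. word_prob \<alpha> w *
      (real (\<Sum>i=1..k. shRSK w i) - (\<Sum>j<k. \<alpha> j) * real n))"

end

theory Submission
  imports Defs
begin
definition valid :: "nat list \<Rightarrow> nat \<Rightarrow> (nat \<Rightarrow> nat set) \<Rightarrow> bool" where
  "valid w k S \<longleftrightarrow> (\<forall>i<k. weakly_incr_on w (S i)) \<and> (\<forall>i<k. \<forall>j<k. i \<noteq> j \<longrightarrow> S i \<inter> S j = {})"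
definition tot :: "nat \<Rightarrow> (nat \<Rightarrow> nat set) \<Rightarrow> nat" where
  "tot k S = (\<Sum>i<k. card (S i))"
lemma tot_bound: assumes "valid w k S" shows "tot k S \<le> k * length w"
proof -
  have "card (S i) \<le> length w" if "i < k" for i
  proof -
    have "S i \<subseteq> {..<length w}" using assms that unfolding valid_def weakly_incr_on_def by blast
    then have "card (S i) \<le> card {..<length w}" by (rule card_mono[rotated]) simp
    then show ?thesis by simp
  qed
  then have "tot k S \<le> (\<Sum>i<k. length w)" unfolding tot_def by (intro sum_mono) simp
  then show ?thesis by simp
qed

lemma greene_alt: "greene k w = Max {tot k S | S. valid w k S}"
  unfolding greene_def tot_def valid_def by (rule refl)

lemma greene_fin: "finite {tot k S | S. valid w k S}"
proof (rule finite_subset[of _ "{..k * length w}"])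
  show "{tot k S | S. valid w k S} \<subseteq> {..k * length w}"
  proof
    fix x assume "x \<in> {tot k S | S. valid w k S}"
    then obtain S where "x = tot k S" "valid w k S" by blast
    then show "x \<in> {..k * length w}" using tot_bound[of w k S] by simp
  qed
qed simp

lemma valid_empty: "valid w k (\<lambda>_. {})"
  unfolding valid_def weakly_incr_on_def by blast

lemma greene_ne: "{tot k S | S. valid w k S} \<noteq> {}"
  using valid_empty by blast

lemma greene_ge: "valid w k S \<Longrightarrow> tot k S \<le> greene k w"
  unfolding greene_alt by (rule Max_ge[OF greene_fin]) blast

lemma greene_att: "\<exists>S. valid w k S \<and> tot k S = greene k w"
proof -
  have "greene k w \<in> {tot k S | S. valid w k S}"
    unfolding greene_alt using greene_fin greene_ne by (rule Max_in)
  then show ?thesis unfolding mem_Collect_eq by metis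
qed

lemma greene_0: "greene 0 w = 0"
  using greene_att[of w 0] by (simp add: tot_def)

lemma greene_mono_k: "greene k w \<le> greene (Suc k) w"
proof -
  obtain S where S: "valid w k S" "tot k S = greene k w" using greene_att by blast
  have "valid w (Suc k) (S(k:={}))" 
  proof -
    have e: "weakly_incr_on w {}" unfolding weakly_incr_on_def by blast
    show ?thesis using S(1) e unfolding valid_def less_Suc_eq fun_upd_def by fastforce
  qed
  moreover have "tot (Suc k) (S(k:={})) = tot k S" unfolding tot_def by simp
  ultimately show ?thesis using greene_ge S(2) by metis
qed

lemma sum_shRSK: "(\<Sum>i=1..k. shRSK w i) = greene k w"
proof (induction k)
  case 0 then show ?case by (simp add: greene_0)
next
  case (Suc k)
  have "(\<Sum>i=1..Suc k. shRSK w i) = (\<Sum>i=1..k. shRSK w i) + shRSK w (Suc k)" by simp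
  also have "\<dots> = greene (Suc k) w" using Suc greene_mono_k[of k w] by (simp add: shRSK_def)
  finally show ?case .
qed


lemma wiI: "X \<subseteq> {..<length w} \<Longrightarrow> (\<And>i j. i\<in>X \<Longrightarrow> j\<in>X \<Longrightarrow> i<j \<Longrightarrow> w!i \<le> w!j) \<Longrightarrow> weakly_incr_on w X"
  unfolding weakly_incr_on_def by blast
lemma wiD1: "weakly_incr_on w X \<Longrightarrow> X \<subseteq> {..<length w}"
  unfolding weakly_incr_on_def by blast
lemma wiD2: "weakly_incr_on w X \<Longrightarrow> i\<in>X \<Longrightarrow> j\<in>X \<Longrightarrow> i<j \<Longrightarrow> w!i \<le> w!j"
  unfolding weakly_incr_on_def by blast
lemma wi_le: "weakly_incr_on w X \<Longrightarrow> i\<in>X \<Longrightarrow> j\<in>X \<Longrightarrow> i\<le>j \<Longrightarrow> w!i \<le> w!j"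
  by (cases "i = j") (auto dest: wiD2)
lemma wi_fin: "weakly_incr_on w X \<Longrightarrow> finite X"
  using wiD1 finite_subset by blast
lemma wi_subset: "weakly_incr_on w X \<Longrightarrow> Y \<subseteq> X \<Longrightarrow> weakly_incr_on w Y"
  unfolding weakly_incr_on_def by blast

lemma validI: "(\<And>i. i<k \<Longrightarrow> weakly_incr_on w (S i)) \<Longrightarrow> (\<And>i j. i<k \<Longrightarrow> j<k \<Longrightarrow> i\<noteq>j \<Longrightarrow> S i \<inter> S j = {}) \<Longrightarrow> valid w k S"
  unfolding valid_def by blast
lemma validD1: "valid w k S \<Longrightarrow> i<k \<Longrightarrow> weakly_incr_on w (S i)"
  unfolding valid_def by blast
lemma validD2: "valid w k S \<Longrightarrow> i<k \<Longrightarrow> j<k \<Longrightarrow> i\<noteq>j \<Longrightarrow> S i \<inter> S j = {}"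
  unfolding valid_def by blast

lemma wi_shift: "weakly_incr_on w X \<Longrightarrow> weakly_incr_on (a#w) (Suc ` X)"
proof (rule wiI)
  assume h: "weakly_incr_on w X"
  show "Suc ` X \<subseteq> {..<length (a#w)}" using wiD1[OF h] by auto
  fix i j assume "i \<in> Suc ` X" "j \<in> Suc ` X" "i < j"
  then obtain i' j' where "i = Suc i'" "j = Suc j'" "i' \<in> X" "j' \<in> X" "i' < j'" by auto
  then show "(a#w)!i \<le> (a#w)!j" using wiD2[OF h] by simp
qed

lemma wi_cons: "weakly_incr_on w X \<Longrightarrow> (\<And>j. j\<in>X \<Longrightarrow> a \<le> w!j) \<Longrightarrow> weakly_incr_on (a#w) (insert 0 (Suc ` X))"
proof (rule wiI)
  assume h: "weakly_incr_on w X" and b: "\<And>j. j\<in>X \<Longrightarrow> a \<le> w!j"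
  show "insert 0 (Suc ` X) \<subseteq> {..<length (a#w)}" using wiD1[OF h] by auto
  fix i j assume i: "i \<in> insert 0 (Suc ` X)" and j: "j \<in> insert 0 (Suc ` X)" and ij: "i < j"
  then obtain j' where j': "j = Suc j'" "j' \<in> X" by auto
  show "(a#w)!i \<le> (a#w)!j"
  proof (cases "i = 0")
    case True then show ?thesis using b j' by simp
  next
    case False
    then obtain i' where "i = Suc i'" "i' \<in> X" using i by auto
    then show ?thesis using wiD2[OF h] j' ij by simp
  qed
qed

lemma wi_zero: "weakly_incr_on (a#w) {0}"
  by (rule wiI) auto

lemma card_Suc_img: "card (Suc ` X) = card X"
  by (simp add: card_image)

lemma sum_delta_Suc:
  assumes "i0 < k" "\<And>i. i<k \<Longrightarrow> card (T i) = card (S i) + (if i = i0 then 1 else 0)"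
  shows "tot k T = Suc (tot k S)"
proof -
  have "tot k T = (\<Sum>i<k. card (S i) + (if i = i0 then 1 else 0))"
    unfolding tot_def using assms(2) by (intro sum.cong) auto
  also have "\<dots> = tot k S + (\<Sum>i<k. (if i = i0 then 1 else 0))"
    unfolding tot_def by (simp add: sum.distrib)
  also have "(\<Sum>i<k. (if i = i0 then 1 else (0::nat))) = 1" using assms(1) by simp
  finally show ?thesis by simp
qed

lemma case_empty:
  assumes v: "valid w k S" and i0: "i0 < k" "S i0 = {}"
  shows "\<exists>T. valid (a#w) k T \<and> tot k T = Suc (tot k S)"
proof -
  define T where "T = (\<lambda>i. if i = i0 then {0} else Suc ` S i)"
  have "valid (a#w) k T"
  proof (rule validI)
    fix i assume "i < k" then show "weakly_incr_on (a#w) (T i)"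
      unfolding T_def using wi_zero wi_shift validD1[OF v] by simp
  next
    fix i j assume "i<k" "j<k" "i\<noteq>j"
    then show "T i \<inter> T j = {}" unfolding T_def using validD2[OF v, of i j] by auto
  qed
  moreover have "tot k T = Suc (tot k S)"
    by (rule sum_delta_Suc[OF i0(1)]) (simp add: T_def i0(2) card_Suc_img)
  ultimately show ?thesis by blast
qed

lemma case_front:
  assumes v: "valid w k S" and i0: "i0 < k" "S i0 \<noteq> {}" "a \<le> w ! Min (S i0)"
  shows "\<exists>T. valid (a#w) k T \<and> tot k T = Suc (tot k S)"
proof -
  define T where "T = (\<lambda>i. if i = i0 then insert 0 (Suc ` S i) else Suc ` S i)"
  have wi0: "weakly_incr_on w (S i0)" using validD1[OF v i0(1)] .
  have fin: "finite (S i0)" using wi_fin[OF wi0] .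
  have b: "a \<le> w!j" if "j \<in> S i0" for j
  proof -
    have "Min (S i0) \<in> S i0" "Min (S i0) \<le> j" using fin i0(2) that by auto
    then show ?thesis using wi_le[OF wi0 _ that] i0(3) by fastforce
  qed
  have "valid (a#w) k T"
  proof (rule validI)
    fix i assume "i < k" then show "weakly_incr_on (a#w) (T i)"
      unfolding T_def using wi_cons[OF wi0 b] wi_shift validD1[OF v] by simp
  next
    fix i j assume "i<k" "j<k" "i\<noteq>j"
    then show "T i \<inter> T j = {}" unfolding T_def using validD2[OF v, of i j] by auto
  qed
  moreover have "tot k T = Suc (tot k S)"
  proof (rule sum_delta_Suc[OF i0(1)])
    fix i assume "i < k"
    have "card (insert 0 (Suc ` S i0)) = Suc (card (S i0))"
      using fin by (simp add: card_Suc_img)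
    then show "card (T i) = card (S i) + (if i = i0 then 1 else 0)"
      by (simp add: T_def card_Suc_img)
  qed
  ultimately show ?thesis by blast
qed


definition phi :: "nat \<Rightarrow> nat list \<Rightarrow> nat set \<Rightarrow> nat" where
  "phi B w X = (if X = {} then B else w ! Min X * (length w + 1) + Min X)"

definition Phi :: "nat \<Rightarrow> nat list \<Rightarrow> nat \<Rightarrow> (nat \<Rightarrow> nat set) \<Rightarrow> nat" where
  "Phi B w k S = (\<Sum>i<k. phi B w (S i))"

lemma phi_lt:
  assumes D: "\<forall>x\<in>set w. x < D" and wi: "weakly_incr_on w X" and ne: "X \<noteq> {}"
  shows "phi (D * (length w + 1)) w X < D * (length w + 1)"
proof -
  let ?N = "length w"
  define m where "m = Min X"
  have m: "m \<in> X" using ne wi_fin[OF wi] unfolding m_def by simp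
  then have mN: "m < ?N" using wiD1[OF wi] by auto
  then have "w ! m < D" using D by simp
  then have "(w!m + 1) * (?N+1) \<le> D * (?N+1)" by (intro mult_right_mono) simp_all
  then show ?thesis unfolding phi_def m_def[symmetric] using ne mN by simp
qed

lemma phi_le:
  assumes D: "\<forall>x\<in>set w. x < D" and wi: "weakly_incr_on w X"
  shows "phi (D * (length w + 1)) w X \<le> D * (length w + 1)"
  using phi_lt[OF D wi] by (cases "X = {}") (auto simp: phi_def)

lemma Phi_le:
  assumes D: "\<forall>x\<in>set w. x < D" and v: "valid w k S"
  shows "Phi (D * (length w + 1)) w k S \<le> k * (D * (length w + 1))"
proof -
  have "Phi (D * (length w + 1)) w k S \<le> (\<Sum>i<k. D * (length w + 1))"
    unfolding Phi_def by (intro sum_mono phi_le[OF D] validD1[OF v]) simp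
  then show ?thesis by simp
qed

lemma sum2:
  fixes k :: nat and F :: "nat \<Rightarrow> nat"
  assumes "i < k" "j < k" "i \<noteq> j"
  shows "(\<Sum>l<k. F l) = F i + F j + (\<Sum>l\<in>{..<k}-{i,j}. F l)"
proof -
  have "(\<Sum>l<k. F l) = F i + (\<Sum>l\<in>{..<k}-{i}. F l)"
    by (rule sum.remove) (use assms in simp_all)
  also have "(\<Sum>l\<in>{..<k}-{i}. F l) = F j + (\<Sum>l\<in>{..<k}-{i}-{j}. F l)"
    by (rule sum.remove) (use assms in auto)
  also have "{..<k}-{i}-{j} = {..<k}-{i,j}" by auto
  finally show ?thesis by simp
qed

lemma valid_update2:
  assumes v: "valid w k S" and ij: "i<k" "j<k" "i\<noteq>j"
    and wi: "weakly_incr_on w A" "weakly_incr_on w B"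
    and sub: "A \<union> B \<subseteq> S i \<union> S j" and dis: "A \<inter> B = {}"
  shows "valid w k (S(i := A, j := B))"
proof (rule validI)
  fix l assume "l < k" then show "weakly_incr_on w ((S(i := A, j := B)) l)"
    using wi validD1[OF v] by simp
next
  fix l m assume lm: "l<k" "m<k" "l\<noteq>m"
  have d1: "S l \<inter> S m = {}" using validD2[OF v lm] .
  have dil: "S i \<inter> S l = {}" if "l < k" "l \<noteq> i" for l using validD2[OF v ij(1) that(1)] that by blast
  have djl: "S j \<inter> S l = {}" if "l < k" "l \<noteq> j" for l using validD2[OF v ij(2) that(1)] that by blast
  show "(S(i := A, j := B)) l \<inter> (S(i := A, j := B)) m = {}"
  proof (cases "l \<in> {i,j}")
    case True
    show ?thesis
    proof (cases "m \<in> {i,j}")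
      case True
      with \<open>l \<in> {i,j}\<close> lm(3) ij(3) dis show ?thesis by auto
    next
      case False
      have "(S(i := A, j := B)) l \<subseteq> S i \<union> S j" using True sub ij(3) by auto
      moreover have "(S(i := A, j := B)) m = S m" using False by auto
      ultimately show ?thesis using dil[OF lm(2)] djl[OF lm(2)] False by blast
    qed
  next
    case False
    show ?thesis
    proof (cases "m \<in> {i,j}")
      case True
      have "(S(i := A, j := B)) m \<subseteq> S i \<union> S j" using True sub ij(3) by auto
      moreover have "(S(i := A, j := B)) l = S l" using False by auto
      ultimately show ?thesis using dil[OF lm(1)] djl[OF lm(1)] False by blast
    next
      case False
      then show ?thesis using d1 \<open>l \<notin> {i,j}\<close> by auto
    qed
  qed
qed

lemma uncross:
  assumes D: "\<forall>x\<in>set w. x < D" and v: "valid w k S" and ij: "i<k" "j<k" "i\<noteq>j"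
    and ne: "S i \<noteq> {}" "S j \<noteq> {}" and pq: "Min (S i) < Min (S j)"
    and eq: "w ! Min (S i) = w ! Min (S j)"
  shows "\<exists>S'. valid w k S' \<and> tot k S' = tot k S \<and>
     Phi (D * (length w + 1)) w k S < Phi (D * (length w + 1)) w k S'"
proof -
  let ?N = "length w" let ?B = "D * (length w + 1)"
  define C1 where "C1 = S i" define C2 where "C2 = S j"
  define p where "p = Min C1" define q where "q = Min C2" define v where "v = w ! p"
  have w1: "weakly_incr_on w C1" and w2: "weakly_incr_on w C2"
    using validD1[OF v] ij unfolding C1_def C2_def by auto
  have f1: "finite C1" and f2: "finite C2" using wi_fin w1 w2 by auto
  have dis12: "C1 \<inter> C2 = {}" using validD2[OF v ij] unfolding C1_def C2_def .
  have p1: "p \<in> C1" and q2: "q \<in> C2" using f1 f2 ne unfolding p_def q_def C1_def C2_def by auto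
  have pmin: "\<And>x. x \<in> C1 \<Longrightarrow> p \<le> x" using f1 unfolding p_def by simp
  have qmin: "\<And>x. x \<in> C2 \<Longrightarrow> q \<le> x" using f2 unfolding q_def by simp
  have pq': "p < q" and vq: "w ! q = v" using pq eq unfolding p_def q_def v_def C1_def C2_def by auto
  have v1: "\<And>x. x \<in> C1 \<Longrightarrow> v \<le> w!x" unfolding v_def using wi_le[OF w1 p1] pmin by blast
  have v2: "\<And>x. x \<in> C2 \<Longrightarrow> v \<le> w!x" using wi_le[OF w2 q2] qmin vq by fastforce
  have qN: "q < ?N" using wiD1[OF w2] q2 by auto
  define P where "P = {x \<in> C1. x < q \<and> w!x = v}"
  define R where "R = C1 - P"
  have pP: "p \<in> P" unfolding P_def using p1 pq' v_def by simp
  have PC1: "P \<subseteq> C1" unfolding P_def by blast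
  have wR: "weakly_incr_on w R" using wi_subset[OF w1] unfolding R_def by blast
  have wPC: "weakly_incr_on w (P \<union> C2)"
  proof (rule wiI)
    show "P \<union> C2 \<subseteq> {..<length w}" using wiD1[OF w1] wiD1[OF w2] PC1 by blast
    fix x y assume x: "x \<in> P \<union> C2" and y: "y \<in> P \<union> C2" and xy: "x < y"
    show "w!x \<le> w!y"
    proof (cases "x \<in> P")
      case True
      show ?thesis
      proof (cases "y \<in> P")
        case True then show ?thesis using \<open>x \<in> P\<close> PC1 wiD2[OF w1] xy by blast
      next
        case False then have "y \<in> C2" using y by blast
        then show ?thesis using v2 \<open>x \<in> P\<close> unfolding P_def by auto
      qed
    next
      case False then have xC: "x \<in> C2" using x by blast
      have "y \<notin> P"
      proof
        assume "y \<in> P" then have "y < q" unfolding P_def by blast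
        then show False using qmin[OF xC] xy by simp
      qed
      then have "y \<in> C2" using y by blast
      then show ?thesis using wiD2[OF w2 xC] xy by blast
    qed
  qed
  define S' where "S' = S(i := R, j := P \<union> C2)"
  have vS': "valid w k S'" unfolding S'_def
    by (rule valid_update2[OF v ij wR wPC]) (use dis12 PC1 in \<open>auto simp: R_def C1_def C2_def\<close>)
  have S'i: "S' i = R" and S'j: "S' j = P \<union> C2" and S'o: "\<And>l. l \<notin> {i,j} \<Longrightarrow> S' l = S l"
    unfolding S'_def using ij(3) by auto
  have rest: "(\<Sum>l\<in>{..<k}-{i,j}. F (S' l)) = (\<Sum>l\<in>{..<k}-{i,j}. F (S l))" for F :: "nat set \<Rightarrow> nat"
    by (rule sum.cong) (auto simp: S'o)
  have fP: "finite P" using f1 PC1 finite_subset by blast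
  have cards: "card R + card (P \<union> C2) = card C1 + card C2"
  proof -
    have "card (P \<union> C2) = card P + card C2" using fP f2 dis12 PC1 by (intro card_Un_disjoint) auto
    moreover have "card R = card C1 - card P" unfolding R_def using PC1 f1 by (simp add: card_Diff_subset fP)
    moreover have "card P \<le> card C1" using PC1 f1 by (simp add: card_mono)
    ultimately show ?thesis by simp
  qed
  have tots: "tot k S' = tot k S"
    unfolding tot_def sum2[OF ij, of "\<lambda>l. card (S' l)"] sum2[OF ij, of "\<lambda>l. card (S l)"] rest
    using cards S'i S'j unfolding C1_def C2_def by simp
  have minPC: "Min (P \<union> C2) = p"
  proof (rule Min_eqI)
    show "finite (P \<union> C2)" using fP f2 by simp
    show "p \<in> P \<union> C2" using pP by simp
    fix y assume "y \<in> P \<union> C2" then show "p \<le> y" using pmin PC1 qmin pq' by fastforce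
  qed
  have phij: "phi ?B w (P \<union> C2) = phi ?B w C1"
    unfolding phi_def using minPC pP p1 unfolding p_def[symmetric] v_def by auto
  have phii: "phi ?B w C2 < phi ?B w R"
  proof (cases "R = {}")
    case True
    then show ?thesis using phi_lt[OF D w2] ne unfolding C2_def by (simp add: phi_def)
  next
    case False
    define r where "r = Min R"
    have fR: "finite R" using f1 unfolding R_def by simp
    have r: "r \<in> R" using fR False unfolding r_def by simp
    then have rC1: "r \<in> C1" and rP: "r \<notin> P" unfolding R_def by auto
    have rq: "r \<noteq> q" using rC1 q2 dis12 by blast
    have vr: "v \<le> w!r" using v1 rC1 .
    have phR: "phi ?B w R = w!r * (?N+1) + r" unfolding phi_def r_def using False by simp
    have phC2: "phi ?B w C2 = v * (?N+1) + q" unfolding phi_def q_def using ne vq unfolding C2_def q_def by simp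
    show ?thesis
    proof (cases "w!r = v")
      case True
      then have "\<not> r < q" using rP rC1 unfolding P_def by blast
      then have "q < r" using rq by simp
      then show ?thesis using phR phC2 True by simp
    next
      case False
      then have "v + 1 \<le> w!r" using vr by simp
      then have "(v+1) * (?N+1) \<le> w!r * (?N+1)" by (intro mult_right_mono) simp_all
      then show ?thesis using phR phC2 qN by simp
    qed
  qed
  have "Phi ?B w k S < Phi ?B w k S'"
    unfolding Phi_def sum2[OF ij, of "\<lambda>l. phi ?B w (S' l)"] sum2[OF ij, of "\<lambda>l. phi ?B w (S l)"] rest
    using phii phij S'i S'j unfolding C1_def C2_def by simp
  then show ?thesis using vS' tots by blast
qed


lemma key:
  assumes D: "\<forall>x\<in>set w. x < D" and a: "a < k"
  shows "valid w k S \<Longrightarrow> \<exists>T. valid (a#w) k T \<and> tot k T = Suc (tot k S)"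
proof (induction "k * (D*(length w+1)) - Phi (D*(length w+1)) w k S" arbitrary: S rule: less_induct)
  case less
  let ?B = "D*(length w+1)"
  have v: "valid w k S" by fact
  show ?case
  proof (cases "\<exists>i<k. S i = {}")
    case True
    then obtain i0 where "i0 < k" "S i0 = {}" by blast
    then show ?thesis using case_empty[OF v] by blast
  next
    case False
    note ne = this
    show ?thesis
    proof (cases "\<exists>i<k. a \<le> w ! Min (S i)")
      case True
      then obtain i0 where "i0 < k" "a \<le> w ! Min (S i0)" by blast
      then show ?thesis using case_front[OF v] ne by blast
    next
      case False
      define f where "f i = w ! Min (S i)" for i
      have img: "f ` {..<k} \<subseteq> {..<a}" using False by (auto simp: f_def not_le)
      have "\<not> inj_on f {..<k}"
      proof
        assume "inj_on f {..<k}"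
        then have "card {..<k} \<le> card {..<a}" using img by (intro card_inj_on_le) auto
        then show False using a by simp
      qed
      then obtain i j where ij: "i < k" "j < k" "i \<noteq> j" and fij: "f i = f j"
        unfolding inj_on_def by blast
      have nei: "S i \<noteq> {}" using ne ij(1) by blast
      have nej: "S j \<noteq> {}" using ne ij(2) by blast
      have fi: "finite (S i)" by (rule wi_fin[OF validD1[OF v ij(1)]])
      have fj: "finite (S j)" by (rule wi_fin[OF validD1[OF v ij(2)]])
      have mi: "Min (S i) \<in> S i" by (rule Min_in[OF fi nei])
      have mj: "Min (S j) \<in> S j" by (rule Min_in[OF fj nej])
      have dij: "S i \<inter> S j = {}" by (rule validD2[OF v ij])
      have mne: "Min (S i) \<noteq> Min (S j)"
      proof
        assume "Min (S i) = Min (S j)"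
        then have "Min (S i) \<in> S i \<inter> S j" using mi mj by simp
        then show False using dij by simp
      qed
      have fij': "w ! Min (S i) = w ! Min (S j)" using fij unfolding f_def .
      have ex: "\<exists>S'. valid w k S' \<and> tot k S' = tot k S \<and> Phi ?B w k S < Phi ?B w k S'"
      proof (cases "Min (S i) < Min (S j)")
        case True
        show ?thesis by (rule uncross[OF D v ij nei nej True fij'])
      next
        case False
        then have lt': "Min (S j) < Min (S i)" using mne by simp
        have ji: "j \<noteq> i" using ij(3) by simp
        show ?thesis by (rule uncross[OF D v ij(2) ij(1) ji nej nei lt' fij'[symmetric]])
      qed
      then obtain S' where S': "valid w k S'" "tot k S' = tot k S" "Phi ?B w k S < Phi ?B w k S'"
        by blast
      have lt: "k * ?B - Phi ?B w k S' < k * ?B - Phi ?B w k S"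
        using S'(3) Phi_le[OF D S'(1)] by linarith
      obtain T where "valid (a#w) k T" "tot k T = Suc (tot k S')"
        using less.hyps[OF lt S'(1)] by blast
      then show ?thesis using S'(2) by metis
    qed
  qed
qed

lemma greene_cons_ge: "greene k w \<le> greene k (a#w)"
proof -
  obtain S where S: "valid w k S" "tot k S = greene k w" using greene_att by blast
  have "valid (a#w) k (\<lambda>i. Suc ` S i)"
  proof (rule validI)
    fix i assume "i < k" then show "weakly_incr_on (a#w) (Suc ` S i)" using wi_shift validD1[OF S(1)] by blast
  next
    fix i j assume "i<k" "j<k" "i\<noteq>j" then show "Suc ` S i \<inter> Suc ` S j = {}" using validD2[OF S(1)] by blast
  qed
  moreover have "tot k (\<lambda>i. Suc ` S i) = tot k S" unfolding tot_def by (simp add: card_Suc_img)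
  ultimately show ?thesis using greene_ge S(2) by metis
qed

lemma greene_cons_gt:
  assumes "a < k" shows "Suc (greene k w) \<le> greene k (a#w)"
proof -
  obtain S where S: "valid w k S" "tot k S = greene k w" using greene_att by blast
  have D: "\<forall>x\<in>set w. x < Suc (sum_list w)" by (simp add: member_le_sum_list le_imp_less_Suc)
  obtain T where "valid (a#w) k T" "tot k T = Suc (tot k S)" using key[OF D assms S(1)] by blast
  then show ?thesis using greene_ge S(2) by metis
qed

lemma finite_words: "finite (words d n)"
proof -
  have "words d n = {xs. set xs \<subseteq> {0..<d} \<and> length xs = n}" unfolding words_def by blast
  then show ?thesis using finite_lists_length_eq[OF finite_atLeastLessThan] by simp
qed

lemma words_Suc: "words d (Suc n) = (\<lambda>(a,w). a#w) ` ({..<d} \<times> words d n)"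
proof
  show "words d (Suc n) \<subseteq> (\<lambda>(a,w). a#w) ` ({..<d} \<times> words d n)"
  proof
    fix x assume "x \<in> words d (Suc n)"
    then have x: "length x = Suc n" "set x \<subseteq> {0..<d}" unfolding words_def by auto
    then obtain a w where "x = a # w" "length w = n" by (auto simp: length_Suc_conv)
    then show "x \<in> (\<lambda>(a,w). a#w) ` ({..<d} \<times> words d n)"
      using x by (auto simp: words_def image_iff)
  qed
next
  show "(\<lambda>(a,w). a#w) ` ({..<d} \<times> words d n) \<subseteq> words d (Suc n)"
    by (auto simp: words_def)
qed

lemma sum_words_Suc:
  "(\<Sum>w\<in>words d (Suc n). f w) = (\<Sum>a<d. \<Sum>w\<in>words d n. f (a#w))"
proof -
  have inj: "inj_on (\<lambda>(a,w). a#w) ({..<d} \<times> words d n)" by (auto simp: inj_on_def)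
  have "(\<Sum>w\<in>words d (Suc n). f w) = (\<Sum>p\<in>{..<d} \<times> words d n. f ((\<lambda>(a,w). a#w) p))"
    unfolding words_Suc by (rule sum.reindex[OF inj, unfolded comp_def])
  also have "\<dots> = (\<Sum>(a,w)\<in>{..<d} \<times> words d n. f (a#w))"
    by (rule sum.cong) auto
  also have "\<dots> = (\<Sum>a<d. \<Sum>w\<in>words d n. f (a#w))"
    by (rule sum.cartesian_product[symmetric])
  finally show ?thesis .
qed

lemma wp_Cons: "word_prob \<alpha> (a#w) = \<alpha> a * word_prob \<alpha> w"
  unfolding word_prob_def length_Cons prod.lessThan_Suc_shift by simp

lemma wp_Nil: "word_prob \<alpha> [] = 1"
  unfolding word_prob_def by simp

lemma words_0: "words d 0 = {[]}"
  unfolding words_def by auto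

lemma wp_sum:
  assumes "(\<Sum>i<d. \<alpha> i) = 1"
  shows "(\<Sum>w\<in>words d n. word_prob \<alpha> w) = 1"
proof (induction n)
  case 0 then show ?case by (simp add: words_0 wp_Nil)
next
  case (Suc n)
  have "(\<Sum>w\<in>words d (Suc n). word_prob \<alpha> w) = (\<Sum>a<d. \<alpha> a * (\<Sum>w\<in>words d n. word_prob \<alpha> w))"
    unfolding sum_words_Suc wp_Cons by (simp add: sum_distrib_left)
  then show ?case using Suc assms by simp
qed

lemma wp_nonneg:
  assumes "\<forall>i<d. \<alpha> i \<ge> 0" "w \<in> words d n"
  shows "0 \<le> word_prob \<alpha> w"
  unfolding word_prob_def
proof (rule prod_nonneg)
  fix i assume "i \<in> {..<length w}"
  then have "w ! i < d" using assms(2) unfolding words_def by (auto dest: nth_mem)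
  then show "0 \<le> \<alpha> (w ! i)" using assms(1) by simp
qed


theorem mainTheorem6:
  fixes d k :: nat and \<alpha> :: "nat \<Rightarrow> real"
  assumes nonneg: "\<forall>i<d. \<alpha> i \<ge> 0"
    and total: "(\<Sum>i<d. \<alpha> i) = 1"
    and sorted: "\<forall>i j. i \<le> j \<and> j < d \<longrightarrow> \<alpha> j \<le> \<alpha> i"
    and k: "1 \<le> k" "k \<le> d"
  shows "mono (\<lambda>n. SW_excess d \<alpha> k n)"
proof -
  define c where "c = (\<Sum>j<k. \<alpha> j)"
  define E where "E n = (\<Sum>w\<in>words d n. word_prob \<alpha> w * real (greene k w))" for n
  have SW: "SW_excess d \<alpha> k n = E n - c * real n" for n
  proof -
    have "SW_excess d \<alpha> k n = (\<Sum>w\<in>words d n. word_prob \<alpha> w * real (greene k w) - word_prob \<alpha> w * (c * real n))"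
      unfolding SW_excess_def sum_shRSK c_def by (simp add: right_diff_distrib)
    also have "\<dots> = E n - (\<Sum>w\<in>words d n. word_prob \<alpha> w) * (c * real n)"
      unfolding E_def by (simp add: sum_subtractf sum_distrib_right)
    finally show ?thesis using wp_sum[OF total] by simp
  qed
  have cases_sum: "(\<Sum>a<d. \<alpha> a * (if a < k then 1 else 0)) = c"
  proof -
    have "(\<Sum>a<d. \<alpha> a * (if a < k then 1 else 0)) = (\<Sum>a<d. (if a < k then \<alpha> a else 0))"
      by (rule sum.cong) auto
    also have "\<dots> = sum \<alpha> ({..<d} \<inter> {a. a < k})"
      by (simp add: sum.If_cases)
    also have "{..<d} \<inter> {a. a < k} = {..<k}" using k by auto
    finally show ?thesis unfolding c_def .
  qed
  have pw: "real (greene k w) + c \<le> (\<Sum>a<d. \<alpha> a * real (greene k (a#w)))" for w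
  proof -
    have "(\<Sum>a<d. \<alpha> a * (real (greene k w) + (if a < k then 1 else 0))) \<le> (\<Sum>a<d. \<alpha> a * real (greene k (a#w)))"
    proof (rule sum_mono)
      fix a assume "a \<in> {..<d}"
      then have "0 \<le> \<alpha> a" using nonneg by simp
      moreover have "real (greene k w) + (if a < k then 1 else 0) \<le> real (greene k (a#w))"
        using greene_cons_ge[of k w a] greene_cons_gt[of a k w] by (cases "a < k") simp_all
      ultimately show "\<alpha> a * (real (greene k w) + (if a < k then 1 else 0)) \<le> \<alpha> a * real (greene k (a#w))"
        by (rule mult_left_mono[rotated])
    qed
    moreover have "(\<Sum>a<d. \<alpha> a * (real (greene k w) + (if a < k then 1 else 0))) = real (greene k w) + c"
      using total cases_sum by (simp add: distrib_left sum.distrib sum_distrib_right[symmetric])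
    ultimately show ?thesis by simp
  qed
  have step: "E n + c \<le> E (Suc n)" for n
  proof -
    have "E (Suc n) = (\<Sum>a<d. \<Sum>w\<in>words d n. \<alpha> a * word_prob \<alpha> w * real (greene k (a#w)))"
      unfolding E_def sum_words_Suc wp_Cons by simp
    also have "\<dots> = (\<Sum>w\<in>words d n. word_prob \<alpha> w * (\<Sum>a<d. \<alpha> a * real (greene k (a#w))))"
      by (subst sum.swap) (simp add: sum_distrib_left mult_ac)
    also have "\<dots> \<ge> (\<Sum>w\<in>words d n. word_prob \<alpha> w * (real (greene k w) + c))"
      by (rule sum_mono, rule mult_left_mono[OF pw wp_nonneg[OF nonneg]]) simp
    moreover have "(\<Sum>w\<in>words d n. word_prob \<alpha> w * (real (greene k w) + c)) = E n + c"
      unfolding E_def using wp_sum[OF total, of n]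
      by (simp add: distrib_left sum.distrib sum_distrib_right[symmetric])
    ultimately show ?thesis by simp
  qed
  show ?thesis
    unfolding mono_iff_le_Suc
  proof
    fix n
    show "SW_excess d \<alpha> k n \<le> SW_excess d \<alpha> k (Suc n)"
      unfolding SW using step[of n] by (simp add: algebra_simps)
  qed
qed

end
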